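(* Let $S$ be a numerical semigroup, let $b\in\mathrm{IBetti}(S)$ and let $s\in S$. Write $s=\omega_s+q_sb$ with $\omega_s\in\mathrm{Ap}(S;b)$ and $q_s\in\mathbb N$. Then $$|\mathrm B(s;\{b\})|=\begin{cases}\binom{\mathrm i(b)+q_s-1}{q_s}&\text{if }\mathfrak d(\omega_s)=1,\\ 0&\text{otherwise.}\end{cases}$$
   Context: A numerical semigroup $S$ is a submonoid of $(\mathbb N,+)$ with finite complement, minimally generated by $\{n_1,\dots,n_e\}$. For $m\in S$, the Apéry set is $\mathrm{Ap}(S;m)=\{s\in S: s-m\notin S\}$; every $s\in S$ is uniquely $s=\omega+qm$ with $\omega\in\mathrm{Ap}(S;m)$, $q\in\mathbb N$. Let $\varphi:\mathbb N^e\to S$, $\varphi(a)=\sum_ia_in_i$; $\mathrm Z(s)=\varphi^{-1}(s)$, $\mathfrak d(s)=|\mathrm Z(s)|$. $\nabla_s$ is the graph on $\mathrm Z(s)$ with distinct $x,y$ adjacent iff $x\cdot y\ne0$; $s$ is a Betti element if $\nabla_s$ is disconnected. A factorization $z\in\mathrm Z(s)$ is isolated if $z\cdot x=0$ for all $x\in\mathrm Z(s)\setminus\{z\}$; $\mathrm I(s)$ is the set of isolated factorizations of $s$, $\mathrm i(s)=|\mathrm I(s)|$, and $\mathrm I(\Lambda)=\bigcup_{t\in\Lambda}\mathrm I(t)$ for $\Lambda\subseteq S$. $\mathrm I_s(S)$ is the set of $z\in\mathbb N^e$ such that $\varphi(z)$ has exactly one factorization. $\mathrm{IBetti}(S)$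 is the set of Betti elements $b$ with $\mathrm I(b)\neq\emptyset$. For $\Lambda\subseteq S$, $\mathrm B(s;\Lambda)=\{w+x_1+\cdots+x_l\in\mathrm Z(s): w\in\mathrm I_s(S),\ l\ge0,\ x_1,\dots,x_l\in\mathrm I(\Lambda)\}$. *)

theory Defs
  imports Main
begin

definition numerical_semigroup :: "nat set \<Rightarrow> bool" where
  "numerical_semigroup S \<longleftrightarrow> 0 \<in> S \<and> (\<forall>a\<in>S. \<forall>b\<in>S. a + b \<in> S) \<and> finite (UNIV - S)"

definition mgens :: "nat set \<Rightarrow> nat set" where
  "mgens S = {n \<in> S. n \<noteq> 0 \<and> \<not> (\<exists>a\<in>S. \<exists>c\<in>S. a \<noteq> 0 \<and> c \<noteq> 0 \<and> n = a + c)}"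

definition vecs :: "nat set \<Rightarrow> (nat \<Rightarrow> nat) set" where
  "vecs S = {z. \<forall>i. i \<notin> mgens S \<longrightarrow> z i = 0}"

definition phi :: "nat set \<Rightarrow> (nat \<Rightarrow> nat) \<Rightarrow> nat" where
  "phi S z = (\<Sum>i\<in>mgens S. z i * i)"

definition dotp :: "nat set \<Rightarrow> (nat \<Rightarrow> nat) \<Rightarrow> (nat \<Rightarrow> nat) \<Rightarrow> nat" where
  "dotp S x y = (\<Sum>i\<in>mgens S. x i * y i)"

definition Zf :: "nat set \<Rightarrow> nat \<Rightarrow> (nat \<Rightarrow> nat) set" where
  "Zf S s = {z \<in> vecs S. phi S z = s}"

definition dfac :: "nat set \<Rightarrow> nat \<Rightarrow> nat" where
  "dfac S s = card (Zf S s)"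

definition Apery :: "nat set \<Rightarrow> nat \<Rightarrow> nat set" where
  "Apery S m = {w \<in> S. \<forall>t\<in>S. w \<noteq> t + m}"

definition nabla_edges :: "nat set \<Rightarrow> nat \<Rightarrow> ((nat \<Rightarrow> nat) \<times> (nat \<Rightarrow> nat)) set" where
  "nabla_edges S s = {(x, y). x \<in> Zf S s \<and> y \<in> Zf S s \<and> x \<noteq> y \<and> dotp S x y \<noteq> 0}"

definition is_Betti :: "nat set \<Rightarrow> nat \<Rightarrow> bool" where
  "is_Betti S s \<longleftrightarrow> s \<in> S \<and>
     (\<exists>x\<in>Zf S s. \<exists>y\<in>Zf S s. (x, y) \<notin> (nabla_edges S s)\<^sup>*)"

definition Iso :: "nat set \<Rightarrow> nat \<Rightarrow> (nat \<Rightarrow> nat) set" where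
  "Iso S s = {z \<in> Zf S s. \<forall>x \<in> Zf S s - {z}. dotp S z x = 0}"

definition iso_num :: "nat set \<Rightarrow> nat \<Rightarrow> nat" where
  "iso_num S s = card (Iso S s)"

definition IsoSet :: "nat set \<Rightarrow> nat set \<Rightarrow> (nat \<Rightarrow> nat) set" where
  "IsoSet S L = (\<Union>t\<in>L. Iso S t)"

definition Iuniq :: "nat set \<Rightarrow> (nat \<Rightarrow> nat) set" where
  "Iuniq S = {z \<in> vecs S. card (Zf S (phi S z)) = 1}"

definition IBetti :: "nat set \<Rightarrow> nat set" where
  "IBetti S = {b. is_Betti S b \<and> Iso S b \<noteq> {}}"

definition Bset :: "nat set \<Rightarrow> nat \<Rightarrow> nat set \<Rightarrow> (nat \<Rightarrow> nat) set" where
  "Bset S s L = {z \<in> Zf S s. \<exists>w \<in> Iuniq S. \<exists>xs :: (nat \<Rightarrow> nat) list.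
      set xs \<subseteq> IsoSet S L \<and> z = (\<lambda>i. w i + sum_list (map (\<lambda>x. x i) xs))}"

end

theory Submission
  imports Defs "HOL-Library.Multiset" "HOL-Library.FuncSet"
begin

lemma ns_mgens_sub: "mgens S \<subseteq> S" "0 \<notin> mgens S"
  by (auto simp: mgens_def)

lemma ns_finite_mgens:
  assumes ns: "numerical_semigroup S"
  shows "finite (mgens S)"
proof -
  have fin: "finite (UNIV - S)" and add: "\<And>a c. a \<in> S \<Longrightarrow> c \<in> S \<Longrightarrow> a + c \<in> S"
    using ns by (auto simp: numerical_semigroup_def)
  have "infinite S"
  proof
    assume "finite S"
    then have "finite (S \<union> (UNIV - S))" using fin by simp
    then show False by simp
  qed
  have "\<not> S \<subseteq> {0}" using \<open>infinite S\<close> infinite_super by blast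
  then obtain x where x: "x \<in> S" "x \<noteq> 0" by blast
  define m where "m = (LEAST x. x \<in> S \<and> x \<noteq> 0)"
  have m: "m \<in> S" "m \<noteq> 0" using LeastI[of "\<lambda>x. x \<in> S \<and> x \<noteq> 0" x] x by (auto simp: m_def)
  have "mgens S \<subseteq> {..m} \<union> (\<lambda>g. g + m) ` (UNIV - S)"
  proof
    fix n assume n: "n \<in> mgens S"
    show "n \<in> {..m} \<union> (\<lambda>g. g + m) ` (UNIV - S)"
    proof (cases "n \<le> m")
      case False
      have "n - m \<notin> S"
      proof
        assume "n - m \<in> S"
        moreover have "n = m + (n - m)" "n - m \<noteq> 0" using False by auto
        ultimately show False using n m unfolding mgens_def by blast
      qed
      then have "n = (n - m) + m" "n - m \<in> UNIV - S" using False by auto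
      then show ?thesis by blast
    qed simp
  qed
  then show ?thesis using fin by (meson finite_Un finite_atMost finite_imageI finite_subset)
qed

lemma phi_add_list:
  "phi S (\<lambda>i. w i + sum_list (map (\<lambda>x. x i) xs)) = phi S w + sum_list (map (phi S) xs)"
proof (induction xs arbitrary: w)
  case Nil then show ?case by simp
next
  case (Cons a xs)
  have "phi S (\<lambda>i. w i + sum_list (map (\<lambda>x. x i) (a # xs)))
      = phi S (\<lambda>i. (w i + a i) + sum_list (map (\<lambda>x. x i) xs))"
    by (simp add: add.assoc)
  also have "\<dots> = phi S (\<lambda>i. w i + a i) + sum_list (map (phi S) xs)" by (rule Cons.IH)
  also have "phi S (\<lambda>i. w i + a i) = phi S w + phi S a"
    by (simp add: phi_def sum.distrib algebra_simps)
  finally show ?case by simp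
qed

lemma vecs_add_list:
  "w \<in> vecs S \<Longrightarrow> set xs \<subseteq> vecs S \<Longrightarrow> (\<lambda>i. w i + sum_list (map (\<lambda>x. x i) xs)) \<in> vecs S"
proof (induction xs arbitrary: w)
  case Nil then show ?case by simp
next
  case (Cons a xs)
  have "(\<lambda>i. w i + a i) \<in> vecs S" using Cons.prems by (auto simp: vecs_def)
  then have "(\<lambda>i. (w i + a i) + sum_list (map (\<lambda>x. x i) xs)) \<in> vecs S"
    using Cons by auto
  then show ?case by (simp add: add.assoc)
qed

lemma phi_add2: "phi S (\<lambda>i. x i + y i) = phi S x + phi S y"
  by (simp add: phi_def sum.distrib algebra_simps)

lemma factorization_exists:
  assumes ns: "numerical_semigroup S" and s: "s \<in> S"
  shows "\<exists>z\<in>vecs S. phi S z = s"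
  using s
proof (induction s rule: less_induct)
  case (less s)
  have fin: "finite (mgens S)" using ns_finite_mgens[OF ns] .
  show ?case
  proof (cases "s = 0")
    case True
    then show ?thesis by (intro bexI[of _ "\<lambda>_. 0"]) (auto simp: vecs_def phi_def)
  next
    case False
    show ?thesis
    proof (cases "s \<in> mgens S")
      case True
      let ?z = "\<lambda>i. if i = s then 1 else 0 :: nat"
      have "phi S ?z = (\<Sum>i\<in>mgens S. if i = s then i else 0)" unfolding phi_def
        by (rule sum.cong) auto
      also have "\<dots> = s" using fin True by (simp add: sum.delta)
      finally have "phi S ?z = s" .
      moreover have "?z \<in> vecs S" using True by (auto simp: vecs_def)
      ultimately show ?thesis by blast
    next
      case nm: False
      then obtain a c where ac: "a \<in> S" "c \<in> S" "a \<noteq> 0" "c \<noteq> 0" "s = a + c"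
        using less.prems False by (auto simp: mgens_def)
      obtain za where za: "za \<in> vecs S" "phi S za = a" using less.IH[of a] ac by auto
      obtain zc where zc: "zc \<in> vecs S" "phi S zc = c" using less.IH[of c] ac by auto
      have "(\<lambda>i. za i + zc i) \<in> vecs S" using za zc by (auto simp: vecs_def)
      moreover have "phi S (\<lambda>i. za i + zc i) = s" using za zc ac phi_add2 by simp
      ultimately show ?thesis by blast
    qed
  qed
qed

lemma mult_in_S: "numerical_semigroup S \<Longrightarrow> i \<in> S \<Longrightarrow> k * i \<in> S"
  by (induction k) (auto simp: numerical_semigroup_def)

lemma sum_in_S:
  assumes "numerical_semigroup S" "finite A" "\<And>i. i \<in> A \<Longrightarrow> f i \<in> S"
  shows "sum f A \<in> S"
  using assms(2,3)
  by (induction A rule: finite_induct) (use assms(1) in \<open>auto simp: numerical_semigroup_def\<close>)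

lemma phi_in_S: "numerical_semigroup S \<Longrightarrow> phi S z \<in> S"
  unfolding phi_def
proof (rule sum_in_S)
  assume ns: "numerical_semigroup S"
  show "finite (mgens S)" using ns_finite_mgens[OF ns] .
  show "z i * i \<in> S" if "i \<in> mgens S" for i
    using mult_in_S[OF ns] ns_mgens_sub(1)[of S] that by blast
qed

lemma Zf_finite:
  assumes ns: "numerical_semigroup S"
  shows "finite (Zf S s)"
proof -
  have fin: "finite (mgens S)" using ns_finite_mgens[OF ns] .
  have "restrict z (mgens S) \<in> PiE (mgens S) (\<lambda>_. {..s})" if "z \<in> Zf S s" for z
  proof -
    have "z i \<le> s" if "i \<in> mgens S" for i
    proof -
      have "i \<noteq> 0" using that ns_mgens_sub(2)[of S] by metis
      then have "z i \<le> z i * i" by simp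
      also have "\<dots> \<le> phi S z" unfolding phi_def
        by (rule member_le_sum) (use fin that in auto)
      finally show ?thesis using \<open>z \<in> Zf S s\<close> by (simp add: Zf_def)
    qed
    then show ?thesis by (auto simp: PiE_iff)
  qed
  then have "(\<lambda>z. restrict z (mgens S)) ` Zf S s \<subseteq> PiE (mgens S) (\<lambda>_. {..s})"
    by blast
  then have A: "finite ((\<lambda>z. restrict z (mgens S)) ` Zf S s)"
    by (meson fin finite_PiE finite_atMost finite_subset)
  have "inj_on (\<lambda>z. restrict z (mgens S)) (Zf S s)"
  proof
    fix x y assume xy: "x \<in> Zf S s" "y \<in> Zf S s" "restrict x (mgens S) = restrict y (mgens S)"
    show "x = y"
    proof
      fix i show "x i = y i"
      proof (cases "i \<in> mgens S")
        case True
        then show ?thesis using fun_cong[OF xy(3), of i] by (simp add: restrict_def)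
      next
        case False
        then show ?thesis using xy(1,2) by (simp add: Zf_def vecs_def)
      qed
    qed
  qed
  then show ?thesis using A finite_imageD by blast
qed

lemma vecs_nonzero:
  assumes "numerical_semigroup S" "z \<in> vecs S" "phi S z \<noteq> 0"
  shows "\<exists>i\<in>mgens S. z i \<noteq> 0"
proof (rule ccontr)
  assume "\<not> (\<exists>i\<in>mgens S. z i \<noteq> 0)"
  then have "\<forall>i\<in>mgens S. z i * i = 0" by auto
  then have "phi S z = 0" unfolding phi_def by (simp add: sum.neutral)
  then show False using assms(3) by simp
qed

lemma zero_fact:
  assumes ns: "numerical_semigroup S" "z \<in> Zf S 0"
  shows "z = (\<lambda>_. 0)"
proof
  fix i
  have fin: "finite (mgens S)" using ns_finite_mgens[OF ns(1)] .
  show "z i = 0"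
  proof (cases "i \<in> mgens S")
    case True
    then have "z i * i = 0" using assms fin by (simp add: Zf_def phi_def sum_eq_0_iff)
    then show ?thesis using True ns_mgens_sub by auto
  qed (use assms in \<open>auto simp: Zf_def vecs_def\<close>)
qed

theorem corollary5p6:
  fixes S :: "nat set" and b s w q :: nat
  assumes "numerical_semigroup S"
    and "b \<in> IBetti S"
    and "s \<in> S"
    and "w \<in> Apery S b"
    and "s = w + q * b"
  shows "card (Bset S s {b}) =
           (if dfac S w = 1 then (iso_num S b + q - 1) choose q else 0)"
proof -
  note ns = assms(1)
  have fin: "finite (mgens S)" using ns_finite_mgens[OF ns] .
  have addS: "\<And>a c. a \<in> S \<Longrightarrow> c \<in> S \<Longrightarrow> a + c \<in> S"
    using ns unfolding numerical_semigroup_def by blast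
  have bB: "is_Betti S b" using assms(2) by (simp add: IBetti_def)
  then have bS: "b \<in> S" by (simp add: is_Betti_def)
  from bB obtain x1 x2 where x12': "x1 \<in> Zf S b" "x2 \<in> Zf S b" "(x1, x2) \<notin> (nabla_edges S b)\<^sup>*"
    unfolding is_Betti_def by blast
  have "x1 \<noteq> x2" using x12'(3) by auto
  with x12' bS have x12: "x1 \<in> Zf S b" "x2 \<in> Zf S b" "x1 \<noteq> x2" "b \<in> S" by auto
  have b0: "b \<noteq> 0"
  proof
    assume "b = 0"
    then have "x1 = (\<lambda>_. 0)" "x2 = (\<lambda>_. 0)" using zero_fact[OF ns] x12 by auto
    then show False using x12 by simp
  qed
  have wS: "w \<in> S" and wAp: "\<And>t. t \<in> S \<Longrightarrow> w \<noteq> t + b" using assms(4) by (auto simp: Apery_def)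
  define I where "I = Iso S b"
  have IZ: "I \<subseteq> Zf S b" by (auto simp: I_def Iso_def)
  have finI: "finite I" using IZ Zf_finite[OF ns] finite_subset by blast
  have key: "length xs = q \<and> phi S w' = w"
    if w': "w' \<in> Iuniq S" and xs: "set xs \<subseteq> I"
      and z: "phi S (\<lambda>i. w' i + sum_list (map (\<lambda>x. x i) xs)) = s" for w' xs
  proof -
    have "sum_list (map (phi S) xs) = length xs * b"
    proof -
      have "map (phi S) xs = replicate (length xs) b"
        proof (rule replicate_eqI)
        fix y assume "y \<in> set (map (phi S) xs)"
        then obtain x where "x \<in> set xs" "y = phi S x" by auto
        then have "x \<in> Zf S b" using xs IZ by blast
        then show "y = b" using \<open>y = phi S x\<close> by (simp add: Zf_def)
      qed simp
      then show ?thesis by (simp add: sum_list_replicate)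
    qed
    then have eq: "phi S w' + length xs * b = w + q * b" using z phi_add_list assms(5) by simp
    have pS: "phi S w' \<in> S" using phi_in_S[OF ns] .
    have nlt: "\<not> length xs > q"
    proof
      assume gt: "length xs > q"
      then obtain k where k: "length xs = Suc (q + k)" using less_iff_Suc_add by blast
      then have "w = (phi S w' + k * b) + b" using eq by (simp add: algebra_simps)
      moreover have "length xs - q - 1 = k" using k by simp
      ultimately have "w = (phi S w' + (length xs - q - 1) * b) + b" by simp
      moreover have "phi S w' + (length xs - q - 1) * b \<in> S"
        using pS mult_in_S[OF ns x12(4)] addS by blast
      ultimately show False using wAp by blast
    qed
    have ngt: "\<not> length xs < q"
    proof
      assume lt: "length xs < q"
      obtain k where k: "q = Suc (length xs + k)" using lt less_iff_Suc_add by blast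
      then have "phi S w' = (w + k * b) + b" using eq by (simp add: algebra_simps)
      moreover have "q - length xs - 1 = k" using k by simp
      ultimately have pw: "phi S w' = (w + (q - length xs - 1) * b) + b" by simp
      have "w + (q - length xs - 1) * b \<in> S"
        using wS mult_in_S[OF ns x12(4)] addS by blast
      then obtain y where y: "y \<in> vecs S" "phi S y = w + (q - length xs - 1) * b"
        using factorization_exists[OF ns] by blast
      have yx: "(\<lambda>i. y i + x i) \<in> Zf S (phi S w')" if "x \<in> Zf S b" for x
        using that y pw phi_add2[of S y x] by (auto simp: Zf_def vecs_def)
      have "card (Zf S (phi S w')) = 1" using w' by (simp add: Iuniq_def)
      then obtain a where a: "Zf S (phi S w') = {a}" by (meson card_1_singletonE)
      have "(\<lambda>i. y i + x1 i) = (\<lambda>i. y i + x2 i)" using yx[OF x12(1)] yx[OF x12(2)] a by simp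
      then have "x1 = x2" by (simp add: fun_eq_iff)
      then show False using x12 by simp
    qed
    from nlt ngt have "length xs = q" by simp
    then show ?thesis using eq by simp
  qed
  show ?thesis
  proof (cases "dfac S w = 1")
    case False
    have "Bset S s {b} = {}"
    proof (rule ccontr)
      assume "Bset S s {b} \<noteq> {}"
      then obtain z w' xs where zz: "z \<in> Zf S s" "w' \<in> Iuniq S" "set xs \<subseteq> I"
        "z = (\<lambda>i. w' i + sum_list (map (\<lambda>x. x i) xs))"
        by (auto simp: Bset_def IsoSet_def I_def)
      have "phi S (\<lambda>i. w' i + sum_list (map (\<lambda>x. x i) xs)) = s" using zz(1,4) by (simp add: Zf_def)
      then have "phi S w' = w" using key[OF zz(2,3)] by blast
      then have "phi S w' = w" "w' \<in> Iuniq S" using zz(2) by auto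
      then show False using False by (auto simp: Iuniq_def dfac_def)
    qed
    then show ?thesis using False by simp
  next
    case True
    then obtain u where u: "Zf S w = {u}" unfolding dfac_def by (meson card_1_singletonE)
    have uv: "u \<in> vecs S" "phi S u = w" using u by (auto simp: Zf_def)
    have uI: "u \<in> Iuniq S" using uv True by (simp add: Iuniq_def dfac_def)
    define g where "g M = (\<lambda>i. u i + (\<Sum>y\<in>#M. y i))" for M :: "(nat \<Rightarrow> nat) multiset"
    have gl: "g (mset xs) = (\<lambda>i. u i + sum_list (map (\<lambda>x. x i) xs))" for xs
      unfolding g_def by (induction xs) (auto simp: fun_eq_iff)
    have Beq: "Bset S s {b} = g ` multisets_of_size I q"
    proof
      show "Bset S s {b} \<subseteq> g ` multisets_of_size I q"
      proof
        fix z assume "z \<in> Bset S s {b}"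
        then obtain w' xs where z: "z \<in> Zf S s" "w' \<in> Iuniq S" "set xs \<subseteq> I"
          "z = (\<lambda>i. w' i + sum_list (map (\<lambda>x. x i) xs))"
          by (auto simp: Bset_def IsoSet_def I_def)
        have "phi S (\<lambda>i. w' i + sum_list (map (\<lambda>x. x i) xs)) = s" using z(1,4) by (simp add: Zf_def)
        then have k: "length xs = q" "phi S w' = w" using key[OF z(2,3)] by blast+
        then have "w' \<in> Zf S w" using z by (simp add: Zf_def Iuniq_def)
        then have "w' = u" using u by simp
        then have "z = g (mset xs)" using z gl by simp
        moreover have "mset xs \<in> multisets_of_size I q" using z k by (simp add: multisets_of_size_def)
        ultimately show "z \<in> g ` multisets_of_size I q" by blast
      qed
    next
      show "g ` multisets_of_size I q \<subseteq> Bset S s {b}"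
      proof
        fix z assume "z \<in> g ` multisets_of_size I q"
        then obtain M where M: "M \<in> multisets_of_size I q" "z = g M" by blast
        obtain xs where xs: "mset xs = M" using ex_mset by blast
        have sx: "set xs \<subseteq> I" "length xs = q" using M xs by (auto simp: multisets_of_size_def)
        have zx: "z = (\<lambda>i. u i + sum_list (map (\<lambda>x. x i) xs))"
          by (simp only: M(2) xs[symmetric] gl)
        have "map (phi S) xs = replicate (length xs) b"
          proof (rule replicate_eqI)
        fix y assume "y \<in> set (map (phi S) xs)"
        then obtain x where "x \<in> set xs" "y = phi S x" by auto
        then have "x \<in> Zf S b" using sx IZ by blast
        then show "y = b" using \<open>y = phi S x\<close> by (simp add: Zf_def)
      qed simp
        then have "phi S z = s" using zx phi_add_list[of S u xs] uv sx assms(5)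
          by (simp add: sum_list_replicate)
        moreover have "z \<in> vecs S" using zx vecs_add_list[of u S xs] uv sx IZ by (auto simp: Zf_def)
        ultimately have "z \<in> Zf S s" by (simp add: Zf_def)
        then show "z \<in> Bset S s {b}" unfolding Bset_def IsoSet_def
          using uI sx zx by (auto simp: I_def)
      qed
    qed
    have inj: "inj_on g (multisets_of_size I q)"
    proof
      fix M1 M2 assume M: "M1 \<in> multisets_of_size I q" "M2 \<in> multisets_of_size I q" "g M1 = g M2"
      show "M1 = M2"
      proof (rule multiset_eqI)
        fix x
        show "count M1 x = count M2 x"
        proof (cases "x \<in> I")
          case False
          then have "x \<notin># M1" "x \<notin># M2" using M(1,2) by (auto simp: multisets_of_size_def)
          then show ?thesis by (simp add: not_in_iff)
        next
          case True
          then have xZ: "x \<in> Zf S b" using IZ by blast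
          then obtain i where i: "i \<in> mgens S" "x i \<noteq> 0"
            using vecs_nonzero[OF ns, of x] b0 by (auto simp: Zf_def)
          have other: "y i = 0" if "y \<in> I" "y \<noteq> x" for y
          proof -
            have "dotp S x y = 0" using True that IZ by (auto simp: I_def Iso_def)
            then have "\<forall>a\<in>mgens S. x a * y a = 0" using fin by (simp add: dotp_def del: mult_is_0)
            then have "x i * y i = 0" using i(1) by blast
            then show ?thesis using i(2) by simp
          qed
          have cnt: "(\<Sum>y\<in>#M. y i) = x i * count M x" if "set_mset M \<subseteq> I" for M
          proof -
            have "image_mset (\<lambda>y. y i) M = image_mset (\<lambda>y. if y = x then x i else 0) M"
              by (rule image_mset_cong) (use that other in auto)
            then show ?thesis by (simp add: sum_mset_delta)
          qed
          have "u i + x i * count M1 x = u i + x i * count M2 x"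
            using fun_cong[OF M(3), of i] cnt M(1,2) by (simp add: g_def multisets_of_size_def)
          then show ?thesis using i by simp
        qed
      qed
    qed
    have "card (Bset S s {b}) = card (multisets_of_size I q)"
      using Beq inj card_image by simp
    also have "\<dots> = (card I + q - 1) choose q" using card_multisets_of_size[OF finI] .
    finally show ?thesis using True by (simp add: I_def iso_num_def)
  qed
qed

end
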